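(* Let $F$ be an APN bijection of $\mathbb F_2^m$ with $F(0)=0$ and $S=STS(\mathcal H^n)$. Then every rotation line at every nonzero point of the self-embedding $S\cup F(S)$ has at least $6$ and at most $2^m-2$ points.
   Context: $n=2^m-1$; identify $\mathbb F_2^m$ with $GF(2^m)$. $F$ is APN if for all $a,b$ with $b\ne0$ the equation $F(x)+F(x+b)=a$ has at most two solutions. $S=STS(\mathcal H^n)$ is the set of 3-subsets $\{a,b,c\}$ of nonzero elements with $a+b+c=0$; $F(S)=\{\{F(a),F(b),F(c)\}:\{a,b,c\}\in S\}$. For nonzero $a$, let $P_a=\mathbb F_2^m\setminus\{0,a\}$, $s_a(y)=a+y$ and $\psi_a(y)=F(F^{-1}(a)+F^{-1}(y))$. The rotation lines at $a$ are the orbits on $P_a$ of the group generated by $s_a,\psi_a$; the number of points of a rotation line is the size of the orbit. *)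

theory Defs
  imports "HOL-Analysis.Finite_Cartesian_Product" "HOL-Library.Z2"
begin

text \<open>The ambient space F_2^m is modelled as the type bit ^ 'm, with m = CARD('m).
  Only its additive structure is used.\<close>

instance bit :: finite
proof
  have "(UNIV :: bit set) = {0, 1}"
    by (auto intro: bit_not_zero_iff[THEN iffD1])
  then show "finite (UNIV :: bit set)" by (metis finite.emptyI finite_insert)
qed

definition APN :: "('b::{finite,ab_group_add} \<Rightarrow> 'b) \<Rightarrow> bool" where
  "APN F \<longleftrightarrow> (\<forall>a b. b \<noteq> 0 \<longrightarrow> card {x. F x + F (x + b) = a} \<le> 2)"

definition P_pts :: "'b::{finite,ab_group_add} \<Rightarrow> 'b set" where
  "P_pts a = UNIV - {0, a}"

definition s_map :: "'b::{finite,ab_group_add} \<Rightarrow> 'b \<Rightarrow> 'b" where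
  "s_map a y = a + y"

definition psi_map :: "('b::{finite,ab_group_add} \<Rightarrow> 'b) \<Rightarrow> 'b \<Rightarrow> 'b \<Rightarrow> 'b" where
  "psi_map F a y = F (inv F a + inv F y)"

text \<open>One-step relation on P_a given by the two generators; the orbit of y under the
  group generated by s_a and psi_a is its class under the reflexive, symmetric,
  transitive closure of this relation.\<close>

definition gen_rel :: "('b::{finite,ab_group_add} \<Rightarrow> 'b) \<Rightarrow> 'b \<Rightarrow> ('b \<times> 'b) set" where
  "gen_rel F a = {(y, s_map a y) | y. y \<in> P_pts a} \<union> {(y, psi_map F a y) | y. y \<in> P_pts a}"

definition rotation_line :: "('b::{finite,ab_group_add} \<Rightarrow> 'b) \<Rightarrow> 'b \<Rightarrow> 'b \<Rightarrow> 'b set" where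
  "rotation_line F a y = {z. (y, z) \<in> (gen_rel F a \<union> (gen_rel F a)\<inverse>)\<^sup>*}"

end

theory Submission
  imports Defs
begin

lemma vadd_self [simp]: "(v::bit^'m) + v = 0"
  by (simp add: vec_eq_iff)

lemma vadd_self2 [simp]: "(v::bit^'m) + (v + w) = w"
  by (metis add.assoc vadd_self add_0)

lemma card_bit: "CARD(bit) = 2"
proof -
  have "(UNIV :: bit set) = {0, 1}" by (auto intro: bit_not_zero_iff[THEN iffD1])
  moreover have "card {0::bit, 1} = 2" by simp
  ultimately show ?thesis by metis
qed

lemma card_vec_bit: "CARD(bit ^ 'm) = 2 ^ CARD('m)"
  by (simp add: card_bit)

lemma apn3:
  fixes F :: "bit ^ 'm \<Rightarrow> bit ^ 'm"
  assumes "APN F" "d \<noteq> 0"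
    and "F x1 + F (x1 + d) = c" "F x2 + F (x2 + d) = c" "F x3 + F (x3 + d) = c"
    and "x1 \<noteq> x2" "x1 \<noteq> x3" "x2 \<noteq> x3"
  shows False
proof -
  have "{x1, x2, x3} \<subseteq> {x. F x + F (x + d) = c}" using assms by auto
  hence "card {x1, x2, x3} \<le> card {x. F x + F (x + d) = c}"
    by (rule card_mono[rotated]) simp
  also have "\<dots> \<le> 2" using assms(1,2) unfolding APN_def by blast
  finally show False using assms(6-8) by simp
qed

theorem mainTheorem15:
  fixes F :: "bit ^ 'm \<Rightarrow> bit ^ 'm"
  assumes "bij F" and "APN F" and "F 0 = 0"
  shows "\<forall>a y. a \<noteq> 0 \<and> y \<in> P_pts a \<longrightarrow>
           6 \<le> card (rotation_line F a y) \<and> card (rotation_line F a y) \<le> 2 ^ CARD('m) - 2"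
proof (intro allI impI)
  fix a y :: "bit ^ 'm"
  assume H: "a \<noteq> 0 \<and> y \<in> P_pts a"
  hence a0: "a \<noteq> 0" and yP: "y \<in> P_pts a" by auto
  have Finv: "\<And>z. F (inv F z) = z" using assms(1) by (simp add: bij_is_surj surj_f_inv_f)
  have invF: "\<And>z. inv F (F z) = z" using assms(1) by (simp add: bij_is_inj inv_f_f)
  define u where "u = inv F a"
  have Fu: "F u = a" using Finv u_def by simp
  have u0: "u \<noteq> 0" using Fu a0 assms(3) by auto
  define psi where "psi = psi_map F a"
  have psi_eq: "\<And>z. psi z = F (u + inv F z)" by (simp add: psi_def psi_map_def u_def)
  have invinj: "\<And>z w. inv F z = inv F w \<Longrightarrow> z = w" by (metis Finv)
  have inv0: "inv F 0 = 0" using invF assms(3) by metis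
  have Pdef: "\<And>z. z \<in> P_pts a \<longleftrightarrow> z \<noteq> 0 \<and> z \<noteq> a" by (auto simp: P_pts_def)
  have sP: "\<And>z. z \<in> P_pts a \<Longrightarrow> a + z \<in> P_pts a"
    using a0 by (auto simp: Pdef) (metis add.commute add_0 vadd_self2)
  have psiP: "\<And>z. z \<in> P_pts a \<Longrightarrow> psi z \<in> P_pts a"
  proof -
    fix z assume "z \<in> P_pts a"
    hence z0: "z \<noteq> 0" and za: "z \<noteq> a" by (auto simp: Pdef)
    have "inv F z \<noteq> u" using za invinj u_def by blast
    hence n1: "u + inv F z \<noteq> 0" by (metis add_0 vadd_self2 add_0_right)
    have "inv F z \<noteq> 0" using z0 invinj inv0 by metis
    hence n2: "u + inv F z \<noteq> u" by simp
    have "psi z \<noteq> 0" using n1 psi_eq invF assms(3) by metis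
    moreover have "psi z \<noteq> a" using n2 psi_eq invF Fu by metis
    ultimately show "psi z \<in> P_pts a" by (simp add: Pdef)
  qed
  have psi_inv: "\<And>z. psi (psi z) = z"
    using psi_eq invF Finv by (metis vadd_self2)
  have psi_inj: "\<And>z w. psi z = psi w \<Longrightarrow> z = w" using psi_inv by metis
  have psi_fix: "\<And>z. psi z \<noteq> z"
  proof
    fix z assume "psi z = z"
    hence "F (u + inv F z) = F (inv F z)" using psi_eq Finv by metis
    hence "u + inv F z = inv F z" using invF by metis
    thus False using u0 by (metis add_0 add.commute add_right_cancel)
  qed
  have key1: "\<And>z. z \<in> P_pts a \<Longrightarrow> psi z \<noteq> a + z"
  proof
    fix z assume zP: "z \<in> P_pts a" and E: "psi z = a + z"
    define x where "x = inv F z"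
    have Fx: "F x = z" using Finv x_def by simp
    have x0: "x \<noteq> 0" using zP Fx assms(3) by (auto simp: Pdef)
    have xu: "x \<noteq> u" using zP Fx Fu by (auto simp: Pdef)
    have E2: "F (x + u) = a + z" using E psi_eq x_def by (simp add: add.commute)
    show False
    proof (rule apn3[OF assms(2) u0])
      show "F 0 + F (0 + u) = a" using assms(3) Fu by simp
      show "F u + F (u + u) = a" using assms(3) Fu by simp
      show "F x + F (x + u) = a" using E2 Fx by (simp add: add.left_commute)
      show "0 \<noteq> u" using u0 by simp
      show "0 \<noteq> x" using x0 by simp
      show "u \<noteq> x" using xu by simp
    qed
  qed
  have key2: "psi (a + y) \<noteq> a + psi y"
  proof
    assume E: "psi (a + y) = a + psi y"
    define x where "x = inv F y"
    define w where "w = inv F (a + y)"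
    have Fx: "F x = y" using Finv x_def by simp
    have Fw: "F w = a + y" using Finv w_def by simp
    have xw: "x \<noteq> w" using Fx Fw a0 by (metis add_0 add_right_cancel)
    have d0: "x + w \<noteq> 0" using xw by (metis add_0 vadd_self2 add_0_right)
    have E2: "F (u + w) = a + F (u + x)" using E psi_eq x_def w_def by simp
    have k1: "F (u + x) \<noteq> a + y" using key1[OF yP] psi_eq x_def by simp
    have uxw: "u + x \<noteq> w" using k1 Fw by metis
    have uxx: "u + x \<noteq> x" using u0 by (metis add_0 add_right_cancel)
    show False
    proof (rule apn3[OF assms(2) d0])
      show "F x + F (x + (x + w)) = a" using Fx Fw by (simp add: add.left_commute)
      show "F w + F (w + (x + w)) = a" using Fx Fw
        by (simp add: add.commute add.left_commute)
      have "u + x + (x + w) = u + w" by (simp add: add.assoc)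
      thus "F (u + x) + F (u + x + (x + w)) = a" using E2
        by (simp add: add.left_commute)
      show "x \<noteq> w" by fact
      show "x \<noteq> u + x" using uxx by simp
      show "w \<noteq> u + x" using uxw by simp
    qed
  qed
  define R where "R = gen_rel F a \<union> (gen_rel F a)\<inverse>"
  have RL: "rotation_line F a y = {z. (y, z) \<in> R\<^sup>*}" by (simp add: rotation_line_def R_def)
  have genP: "\<And>p q. (p, q) \<in> gen_rel F a \<Longrightarrow> p \<in> P_pts a \<and> q \<in> P_pts a"
    using sP psiP unfolding gen_rel_def s_map_def psi_def by auto
  have RP: "\<And>p q. (p, q) \<in> R \<Longrightarrow> p \<in> P_pts a \<and> q \<in> P_pts a"
    using genP unfolding R_def by auto
  have sub: "rotation_line F a y \<subseteq> P_pts a"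
  proof
    fix z assume "z \<in> rotation_line F a y"
    hence "(y, z) \<in> R\<^sup>*" by (simp add: RL)
    thus "z \<in> P_pts a"
      by (induction rule: rtrancl_induct) (auto simp: yP dest: RP)
  qed
  have cardP: "card (P_pts a) = 2 ^ CARD('m) - 2"
  proof -
    have "card (P_pts a) = card (UNIV :: (bit^'m) set) - card {0, a}"
      unfolding P_pts_def by (rule card_Diff_subset) auto
    thus ?thesis using a0 by (simp add: card_bit)
  qed
  have up: "card (rotation_line F a y) \<le> 2 ^ CARD('m) - 2"
    using card_mono[OF _ sub] cardP by simp
  have Rs: "\<And>z. z \<in> P_pts a \<Longrightarrow> (z, a + z) \<in> R"
    unfolding R_def gen_rel_def s_map_def by blast
  have Rpsi: "\<And>z. z \<in> P_pts a \<Longrightarrow> (z, psi z) \<in> R"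
    unfolding R_def gen_rel_def psi_def by blast
  have syP: "a + y \<in> P_pts a" using sP yP .
  have pyP: "psi y \<in> P_pts a" using psiP yP .
  have psyP: "psi (a + y) \<in> P_pts a" using psiP syP .
  have m1: "(y, a + y) \<in> R\<^sup>*" using Rs[OF yP] by blast
  have m2: "(y, psi y) \<in> R\<^sup>*" using Rpsi[OF yP] by blast
  have m3: "(y, a + psi y) \<in> R\<^sup>*" using m2 Rs[OF pyP] by (rule rtrancl_into_rtrancl)
  have m4: "(y, psi (a + y)) \<in> R\<^sup>*" using m1 Rpsi[OF syP] by (rule rtrancl_into_rtrancl)
  have m5: "(y, a + psi (a + y)) \<in> R\<^sup>*" using m4 Rs[OF psyP] by (rule rtrancl_into_rtrancl)
  let ?S = "{y, a + y, psi y, a + psi y, psi (a + y), a + psi (a + y)}"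
  have Ssub: "?S \<subseteq> rotation_line F a y" using m1 m2 m3 m4 m5 by (auto simp: RL)
  have cancel: "\<And>p q. (a + p = q) = (p = a + q)" by (metis vadd_self2)
  have cancel2: "\<And>p. (a + p = p) = False" "\<And>p. (p = a + p) = False"
    using a0 by (metis add_0 add_right_cancel)+
  have k1y: "psi y \<noteq> a + y" using key1[OF yP] .
  have k1sy: "psi (a + y) \<noteq> y" using key1[OF syP] by simp
  have fy: "psi y \<noteq> y" and fsy: "psi (a + y) \<noteq> a + y" using psi_fix by auto
  have inj1: "psi y \<noteq> psi (a + y)" using psi_inj cancel2 by metis
  have d14: "y \<noteq> a + psi y" using k1y by (metis vadd_self2)
  have d16: "y \<noteq> a + psi (a + y)" using fsy by (metis vadd_self2)
  have d24: "a + y \<noteq> a + psi y" using fy by simp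
  have d26: "a + y \<noteq> a + psi (a + y)" using k1sy by simp
  have d36: "psi y \<noteq> a + psi (a + y)" using key2 by (metis vadd_self2)
  have d46: "a + psi y \<noteq> a + psi (a + y)" using inj1 by simp
  have "card ?S = 6"
    using cancel2 k1y k1sy fy fsy inj1 key2 d14 d16 d24 d26 d36 d46
      k1y[THEN not_sym] k1sy[THEN not_sym] fy[THEN not_sym] fsy[THEN not_sym]
      inj1[THEN not_sym] key2[THEN not_sym] d14[THEN not_sym] d16[THEN not_sym]
      d24[THEN not_sym] d26[THEN not_sym] d36[THEN not_sym] d46[THEN not_sym]
    by simp
  hence low: "6 \<le> card (rotation_line F a y)"
    using card_mono[OF _ Ssub] by simp
  show "6 \<le> card (rotation_line F a y) \<and> card (rotation_line F a y) \<le> 2 ^ CARD('m) - 2"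
    using low up by simp
qed

end
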